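(* If a homomorphism distinguishing closed class $\mathcal{F}$ of simple graphs is closed under deleting edges, then it is closed under taking subgraphs.
   Context: All graphs are finite, undirected, without multiple edges; simple means without loops. $\hom(F,G)$ is the number of homomorphisms $F\to G$; $G\equiv_{\mathcal{F}}H$ means $\hom(F,G)=\hom(F,H)$ for all $F\in\mathcal{F}$; $\mathrm{cl}(\mathcal{F})$ is the class of all simple graphs $K$ such that for all simple $G,H$, $G\equiv_{\mathcal{F}}H$ implies $\hom(K,G)=\hom(K,H)$; $\mathcal{F}$ is homomorphism distinguishing closed if $\mathrm{cl}(\mathcal{F})=\mathcal{F}$. Deleting edges yields a graph with the same vertex set and a subset of the edges; subgraphs may also delete vertices. *)

theory Defs
  imports "HOL-Library.FuncSet"
begin

text \<open>Graphs on vertices from nat: a vertex set and a set of ordered pairs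
(an undirected edge {u,v} is represented by both (u,v) and (v,u)).\<close>
type_synonym graph = "nat set \<times> (nat \<times> nat) set"

definition verts :: "graph \<Rightarrow> nat set" where "verts G = fst G"
definition edges :: "graph \<Rightarrow> (nat \<times> nat) set" where "edges G = snd G"

definition simple_graph :: "graph \<Rightarrow> bool" where
  "simple_graph G \<longleftrightarrow> finite (verts G) \<and> edges G \<subseteq> verts G \<times> verts G
     \<and> sym (edges G) \<and> irrefl (edges G)"

definition homs :: "graph \<Rightarrow> graph \<Rightarrow> (nat \<Rightarrow> nat) set" where
  "homs F G = {h \<in> verts F \<rightarrow>\<^sub>E verts G. \<forall>(u,v) \<in> edges F. (h u, h v) \<in> edges G}"

definition hom_count :: "graph \<Rightarrow> graph \<Rightarrow> nat" where
  "hom_count F G = card (homs F G)"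

definition hom_equiv :: "graph set \<Rightarrow> graph \<Rightarrow> graph \<Rightarrow> bool" where
  "hom_equiv \<F> G H \<longleftrightarrow> (\<forall>F \<in> \<F>. hom_count F G = hom_count F H)"

definition hd_cl :: "graph set \<Rightarrow> graph set" where
  "hd_cl \<F> = {K. simple_graph K \<and> (\<forall>G H. simple_graph G \<longrightarrow> simple_graph H \<longrightarrow>
       hom_equiv \<F> G H \<longrightarrow> hom_count K G = hom_count K H)}"

definition hd_closed :: "graph set \<Rightarrow> bool" where
  "hd_closed \<F> \<longleftrightarrow> hd_cl \<F> = \<F>"

definition edge_deletion_of :: "graph \<Rightarrow> graph \<Rightarrow> bool" where
  "edge_deletion_of K G \<longleftrightarrow> verts K = verts G \<and> edges K \<subseteq> edges G"

definition subgraph_of :: "graph \<Rightarrow> graph \<Rightarrow> bool" where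
  "subgraph_of K G \<longleftrightarrow> verts K \<subseteq> verts G \<and> edges K \<subseteq> edges G"

definition closed_under_edge_deletion :: "graph set \<Rightarrow> bool" where
  "closed_under_edge_deletion \<F> \<longleftrightarrow>
     (\<forall>G \<in> \<F>. \<forall>K. simple_graph K \<and> edge_deletion_of K G \<longrightarrow> K \<in> \<F>)"

definition closed_under_subgraphs :: "graph set \<Rightarrow> bool" where
  "closed_under_subgraphs \<F> \<longleftrightarrow>
     (\<forall>G \<in> \<F>. \<forall>K. simple_graph K \<and> subgraph_of K G \<longrightarrow> K \<in> \<F>)"

end

theory Submission
  imports Defs
begin

lemma homs_split:
  assumes E: "edges K \<subseteq> verts K \<times> verts K" and D: "verts K \<inter> S = {}"
  shows "bij_betw (\<lambda>h. (restrict h (verts K), restrict h S))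
           (homs (verts K \<union> S, edges K) X) (homs K X \<times> (S \<rightarrow>\<^sub>E verts X))"
proof (rule bij_betw_byWitness[where f' = "\<lambda>(f,g) x. if x \<in> verts K then f x else g x"])
  show "\<forall>a\<in>homs (verts K \<union> S, edges K) X.
     (\<lambda>(f, g) x. if x \<in> verts K then f x else g x) (restrict a (verts K), restrict a S) = a"
    by (auto simp: homs_def verts_def edges_def PiE_def extensional_def fun_eq_iff)
  show "\<forall>a'\<in>homs K X \<times> (S \<rightarrow>\<^sub>E verts X).
     (restrict ((\<lambda>(f, g) x. if x \<in> verts K then f x else g x) a') (verts K),
      restrict ((\<lambda>(f, g) x. if x \<in> verts K then f x else g x) a') S) = a'"
    using D by (auto simp: homs_def PiE_def extensional_def fun_eq_iff)
  show "(\<lambda>h. (restrict h (verts K), restrict h S)) ` homs (verts K \<union> S, edges K) X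
    \<subseteq> homs K X \<times> (S \<rightarrow>\<^sub>E verts X)"
    using E by (fastforce simp: homs_def verts_def edges_def PiE_def extensional_def)
  show "(\<lambda>(f, g) x. if x \<in> verts K then f x else g x) ` (homs K X \<times> (S \<rightarrow>\<^sub>E verts X))
    \<subseteq> homs (verts K \<union> S, edges K) X"
    using E D by (fastforce simp: homs_def verts_def edges_def PiE_def extensional_def)
qed

lemma hom_count_split:
  assumes E: "edges K \<subseteq> verts K \<times> verts K" and D: "verts K \<inter> S = {}" and f: "finite S"
  shows "hom_count (verts K \<union> S, edges K) X = hom_count K X * card (verts X) ^ card S"
proof -
  have "hom_count (verts K \<union> S, edges K) X = card (homs K X \<times> (S \<rightarrow>\<^sub>E verts X))"
    unfolding hom_count_def using bij_betw_same_card[OF homs_split[OF E D]] .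
  also have "\<dots> = hom_count K X * card (verts X) ^ card S"
    using f by (simp add: card_cartesian_product card_PiE hom_count_def)
  finally show ?thesis .
qed

theorem lemma12:
  fixes \<F> :: "graph set"
  assumes "\<forall>G \<in> \<F>. simple_graph G"
    and "hd_closed \<F>"
    and "closed_under_edge_deletion \<F>"
  shows "closed_under_subgraphs \<F>"
  unfolding closed_under_subgraphs_def
proof (intro ballI allI impI, elim conjE)
  fix G K assume GF: "G \<in> \<F>" and sK: "simple_graph K" and sub: "subgraph_of K G"
  have sG: "simple_graph G" using assms(1) GF by blast
  define S where "S = verts G - verts K"
  define K' where "K' = (verts K \<union> S, edges K)"
  have vK: "verts K \<subseteq> verts G" using sub by (simp add: subgraph_of_def)
  have EK: "edges K \<subseteq> verts K \<times> verts K" using sK by (simp add: simple_graph_def)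
  have fS: "finite S" using sG by (simp add: simple_graph_def S_def)
  have DS: "verts K \<inter> S = {}" by (auto simp: S_def)
  have vK': "verts K \<union> S = verts G" using vK by (auto simp: S_def)
  have "simple_graph K'" using sK sG vK'
    by (auto simp: simple_graph_def K'_def verts_def edges_def)
  moreover have "edge_deletion_of K' G" using sub vK'
    by (simp add: edge_deletion_of_def subgraph_of_def K'_def verts_def edges_def)
  ultimately have K'F: "K' \<in> \<F>" using assms(3) GF unfolding closed_under_edge_deletion_def by blast
  define E0 :: graph where "E0 = (verts G, {})"
  have "simple_graph E0" using sG by (auto simp: simple_graph_def E0_def verts_def edges_def sym_def irrefl_def)
  moreover have "edge_deletion_of E0 G"
    by (simp add: edge_deletion_of_def E0_def verts_def edges_def)
  ultimately have E0F: "E0 \<in> \<F>" using assms(3) GF unfolding closed_under_edge_deletion_def by blast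
  have fG: "finite (verts G)" using sG by (simp add: simple_graph_def)
  have cntE0: "hom_count E0 X = card (verts X) ^ card (verts G)" for X
  proof -
    have "hom_count (verts ({},{}) \<union> verts G, edges ({},{})) X
        = hom_count ({},{}) X * card (verts X) ^ card (verts G)"
      using fG by (intro hom_count_split) (auto simp: verts_def edges_def)
    moreover have "hom_count ({},{}) X = 1"
      by (simp add: hom_count_def homs_def verts_def edges_def)
    ultimately show ?thesis by (simp add: E0_def verts_def edges_def)
  qed
  have cntK': "hom_count K' X = hom_count K X * card (verts X) ^ card S" for X
    unfolding K'_def by (rule hom_count_split[OF EK DS fS])
  have "K \<in> hd_cl \<F>"
    unfolding hd_cl_def
  proof (intro CollectI conjI sK allI impI)
    fix G1 G2 assume s1: "simple_graph G1" and s2: "simple_graph G2" and eq: "hom_equiv \<F> G1 G2"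
    have e1: "hom_count K G1 * card (verts G1) ^ card S = hom_count K G2 * card (verts G2) ^ card S"
      using eq K'F cntK'[of G1] cntK'[of G2] unfolding hom_equiv_def by metis
    show "hom_count K G1 = hom_count K G2"
    proof (cases "card S = 0")
      case True then show ?thesis using e1 by simp
    next
      case False
      then have "S \<noteq> {}" by auto
      then have nG: "card (verts G) > 0" using fG vK' by (auto simp: card_gt_0_iff)
      have "card (verts G1) ^ card (verts G) = card (verts G2) ^ card (verts G)"
        using eq E0F cntE0[of G1] cntE0[of G2] unfolding hom_equiv_def by metis
      then have c: "card (verts G1) = card (verts G2)"
        using nG by (metis gr0_implies_Suc power_inject_base zero_le)
      show ?thesis
      proof (cases "card (verts G1) = 0")
        case True
        then have "verts G1 = {}" "verts G2 = {}" using s1 s2 c by (auto simp: simple_graph_def)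
        then have "G1 = G2" using s1 s2 unfolding simple_graph_def verts_def edges_def
          by (metis prod.collapse subset_empty Sigma_empty1)
        then show ?thesis by simp
      next
        case False
        then show ?thesis using e1 c by simp
      qed
    qed
  qed
  then show "K \<in> \<F>" using assms(2) by (simp add: hd_closed_def)
qed

end
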